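(* $\inf S = 1$, where $S$ is the set of $\beta>1$ with $S_\beta^+ = S_\beta^-$ (notation as in the context).
   Context: For $\beta>1$ let $f_\beta\colon[0,1]\to[0,1)$, $f_\beta(x)=\beta x \bmod 1$, and for $x\in[0,1]$ let $d(x,\beta)=(d_k(x,\beta))_{k\ge1}$ with $d_k(x,\beta)=\lfloor \beta f_\beta^{k-1}(x)\rfloor$. Let $S_\beta^+$ be the closure, in the product topology on $\{0,1,\dots,\lfloor\beta\rfloor\}^{\mathbb N}$, of $\{d(x,\beta): x\in[0,1)\}$. Let $S_\beta$ be the set of bi-infinite sequences $(\ldots,a_{-1},a_0,a_1,\ldots)$ such that $(a_n,a_{n+1},\ldots)\in S_\beta^+$ for every $n\in\mathbb Z$. Let $S_\beta^-$ be the set of one-sided sequences $(b_1,b_2,\ldots)$ such that the bi-infinite sequence $(\ldots,b_2,b_1,0,0,\ldots)$ (with $b_1$ at position $0$, $b_2$ at position $-1$, etc., and zeros at positions $1,2,\dots$) belongs to $S_\beta$; equivalently, there exists $(a_1,a_2,\ldots)\in S_\beta^+$ with $(\ldots,b_2,b_1,a_1,a_2,\ldots)\in S_\beta$. Define $S=\{\beta>1 : S_\beta^+=S_\beta^-\}$. *)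

theory Defs
  imports "HOL-Analysis.Analysis"
begin

definition beta_map :: "real \<Rightarrow> real \<Rightarrow> real" where
  "beta_map \<beta> x = \<beta> * x - of_int \<lfloor>\<beta> * x\<rfloor>"

text \<open>Digit sequence d(x,beta), indexed from 0: entry k is d_{k+1}(x,beta)
  = floor(beta * f_beta^k(x)).\<close>
definition beta_digits :: "real \<Rightarrow> real \<Rightarrow> nat \<Rightarrow> nat" where
  "beta_digits \<beta> x k = nat \<lfloor>\<beta> * (beta_map \<beta> ^^ k) x\<rfloor>"

text \<open>S_beta^+: closure in the product topology (nat discrete) of the digit
  sequences of points of [0,1).  (The alphabet space is closed in nat^N, so
  the closure is the same as within it.)\<close>
definition S_plus :: "real \<Rightarrow> (nat \<Rightarrow> nat) set" where
  "S_plus \<beta> = closure (beta_digits \<beta> ` {0..<1})"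

definition S_bi :: "real \<Rightarrow> (int \<Rightarrow> nat) set" where
  "S_bi \<beta> = {a. \<forall>n::int. (\<lambda>k::nat. a (n + int k)) \<in> S_plus \<beta>}"

text \<open>S_beta^-: sequences (b_1,b_2,...) (indexed from 0) such that
  (...,b_2,b_1,0,0,...) with b_1 at position 0 lies in S_beta.\<close>
definition S_minus :: "real \<Rightarrow> (nat \<Rightarrow> nat) set" where
  "S_minus \<beta> = {b. (\<lambda>i::int. if i \<le> 0 then b (nat (- i)) else 0) \<in> S_bi \<beta>}"

definition S_set :: "real set" where
  "S_set = {\<beta>. \<beta> > 1 \<and> S_plus \<beta> = S_minus \<beta>}"

end

theory Submission
  imports Defs
begin

definition P :: "nat \<Rightarrow> (nat \<Rightarrow> nat) set" where
  "P m = {s. (\<forall>i. s i \<le> 1) \<and> (\<forall>i j. 1 \<le> j \<longrightarrow> j \<le> m \<longrightarrow> s i = 0 \<or> s (i+j) = 0)}"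

definition val :: "real \<Rightarrow> nat \<Rightarrow> (nat \<Rightarrow> nat) \<Rightarrow> real" where
  "val b L s = (\<Sum>i<L. real (s i) / b ^ Suc i)"

lemma tc: fixes f :: "'x \<Rightarrow> 'a \<Rightarrow> 'b::topological_space"
  assumes "\<And>i. ((\<lambda>n. f n i) \<longlongrightarrow> l i) F" shows "(f \<longlongrightarrow> l) F"
proof -
  have "limitin (product_topology (\<lambda>_. euclidean) UNIV) f l F"
    using assms by (simp add: limitin_componentwise)
  then show ?thesis by (simp add: euclidean_product_topology)
qed

lemma closed_P: "closed (P m)"
  unfolding P_def
  by (intro closed_Collect_conj closed_Collect_all closed_Collect_imp closed_Collect_disj
      closed_Collect_le closed_Collect_eq continuous_on_product_coordinates continuous_on_const
      open_Collect_const)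

lemma P_D: "s \<in> P m \<Longrightarrow> 1 \<le> j \<Longrightarrow> j \<le> m \<Longrightarrow> s i = 0 \<or> s (i + j) = 0"
  unfolding P_def by simp

lemma P_le: "s \<in> P m \<Longrightarrow> s i \<le> 1"
  unfolding P_def by simp

lemma P_shift: assumes "s \<in> P m" shows "(\<lambda>i. s (i + k)) \<in> P m"
  unfolding P_def
proof (intro CollectI conjI allI impI)
  fix i show "s (i + k) \<le> 1" using assms unfolding P_def by auto
next
  fix i j :: nat assume "1 \<le> j" "j \<le> m"
  then have "s (i + k) = 0 \<or> s (i + k + j) = 0" using P_D[OF assms, of j "i + k"] by simp
  then show "s (i + k) = 0 \<or> s (i + j + k) = 0" by (simp add: ac_simps)
qed

lemma val_Suc: "val b (Suc L) s = real (s 0) / b + val b L (\<lambda>i. s (Suc i)) / b"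
proof -
  have "val b (Suc L) s = real (s 0) / b + (\<Sum>i<L. real (s (Suc i)) / b ^ Suc (Suc i))"
    unfolding val_def sum.lessThan_Suc_shift by simp
  also have "(\<Sum>i<L. real (s (Suc i)) / b ^ Suc (Suc i)) = (\<Sum>i<L. real (s (Suc i)) / b ^ Suc i / b)"
    by (intro sum.cong) (auto simp: field_simps)
  also have "\<dots> = val b L (\<lambda>i. s (Suc i)) / b"
    unfolding val_def by (simp add: sum_divide_distrib)
  finally show ?thesis .
qed

lemma val_supp: "\<forall>i\<ge>L. s i = 0 \<Longrightarrow> val b (Suc L) s = val b L s"
  unfolding val_def by simp

lemma val_nonneg: "b > 0 \<Longrightarrow> 0 \<le> val b L s"
  unfolding val_def by (intro sum_nonneg) auto

lemma val_rec: "\<forall>i\<ge>L. s i = 0 \<Longrightarrow> val b L s = real (s 0) / b + val b L (\<lambda>i. s (Suc i)) / b"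
  using val_supp[of L s b] val_Suc[of b L s] by simp

lemma val_zeros:
  assumes "b > 0"
  shows "\<forall>i\<ge>L. s i = 0 \<Longrightarrow> \<forall>i<k. s i = 0 \<Longrightarrow> val b L s = val b L (\<lambda>i. s (i + k)) / b ^ k"
proof (induction k arbitrary: s)
  case 0 then show ?case by simp
next
  case (Suc k)
  have "val b L s = val b L (\<lambda>i. s (Suc i)) / b"
    using val_rec[of L s b] Suc.prems by simp
  also have "val b L (\<lambda>i. s (Suc i)) = val b L (\<lambda>i. s (Suc (i + k))) / b ^ k"
    using Suc.IH[of "\<lambda>i. s (Suc i)"] Suc.prems by auto
  finally show ?case using assms by (simp add: field_simps)
qed

locale bb =
  fixes b :: real and m :: nat
  assumes b1: "1 < b" and b2: "b < 2" and eq: "b ^ m * (b - 1) = 1"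
begin

lemma bpow: "b ^ Suc m = b ^ m + 1"
  using eq by (simp add: algebra_simps)

lemma val_lt1: "\<forall>s. s \<in> P m \<longrightarrow> (\<forall>i\<ge>L. s i = 0) \<longrightarrow> val b L s < 1"
proof (induction L)
  case 0 then show ?case by (simp add: val_def)
next
  case (Suc L0)
  show ?case
  proof (intro allI impI)
    fix s assume sP: "s \<in> P m" and sup: "\<forall>i\<ge>Suc L0. s i = 0"
    let ?t = "\<lambda>i. s (Suc i)"
    have tP: "?t \<in> P m" using P_shift[OF sP, of 1] by simp
    have tsup: "\<forall>i\<ge>L0. ?t i = 0" using sup by auto
    have v: "val b (Suc L0) s = real (s 0) / b + val b L0 ?t / b" by (rule val_Suc)
    have s01: "s 0 = 0 \<or> s 0 = 1" proof -
      have "s 0 \<le> 1" using sP unfolding P_def by auto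
      then show ?thesis by arith
    qed
    then show "val b (Suc L0) s < 1"
    proof
      assume "s 0 = 0"
      then have "val b (Suc L0) s = val b L0 ?t / b" using v by simp
      moreover have "val b L0 ?t < 1" using Suc.IH tP tsup by blast
      ultimately show ?thesis using b1 by (simp add: divide_less_eq)
    next
      assume s0: "s 0 = 1"
      have tz: "\<forall>i<m. ?t i = 0"
      proof (intro allI impI)
        fix i assume "i < m"
        then have "s 0 = 0 \<or> s (0 + Suc i) = 0" using P_D[OF sP, of "Suc i" 0] by simp
        then show "?t i = 0" using s0 by simp
      qed
      let ?u = "\<lambda>i. ?t (i + m)"
      have "val b L0 ?t = val b L0 ?u / b ^ m"
        using val_zeros[of b L0 ?t m] tz tsup b1 by simp
      moreover have "val b L0 ?u < 1" using Suc.IH P_shift[OF tP, of m] tsup by auto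
      ultimately have "val b L0 ?t < 1 / b ^ m" using b1 by (simp add: divide_strict_right_mono)
      then have "val b L0 ?t / b < 1 / b ^ m / b" using b1 by (intro divide_strict_right_mono) auto
      then have "val b (Suc L0) s < 1 / b + 1 / b ^ m / b" using v s0 by simp
      also have "\<dots> = (b ^ m + 1) / b ^ Suc m" using b1 by (simp add: field_simps)
      also have "\<dots> = 1"
      proof -
        have "b ^ m + 1 > 0" using b1 by (simp add: add_pos_nonneg)
        then show ?thesis using bpow by simp
      qed
      finally show ?thesis .
    qed
  qed
qed

lemma digits_val:
  assumes sP: "s \<in> P m" and sup: "\<forall>i\<ge>L. s i = 0"
  shows "beta_digits b (val b L s) = s"
proof -
  have key: "\<And>t. t \<in> P m \<Longrightarrow> \<forall>i\<ge>L. t i = 0 \<Longrightarrow>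
      b * val b L t = real (t 0) + val b L (\<lambda>i. t (Suc i)) \<and>
      \<lfloor>b * val b L t\<rfloor> = int (t 0) \<and> beta_map b (val b L t) = val b L (\<lambda>i. t (Suc i))"
  proof -
    fix t assume tP: "t \<in> P m" and ts: "\<forall>i\<ge>L. t i = 0"
    have e: "b * val b L t = real (t 0) + val b L (\<lambda>i. t (Suc i))"
      using val_rec[OF ts, of b] b1 by (simp add: field_simps)
    have "(\<lambda>i. t (Suc i)) \<in> P m" using P_shift[OF tP, of 1] by simp
    then have lt: "val b L (\<lambda>i. t (Suc i)) < 1" using val_lt1 ts by auto
    have ge: "0 \<le> val b L (\<lambda>i. t (Suc i))" using val_nonneg b1 by simp
    have f: "\<lfloor>b * val b L t\<rfloor> = int (t 0)" unfolding e using lt ge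
      by (intro floor_unique) auto
    show "?thesis t" using e f unfolding beta_map_def by simp
  qed
  have it: "\<And>k. (beta_map b ^^ k) (val b L s) = val b L (\<lambda>i. s (i + k))"
  proof -
    fix k show "(beta_map b ^^ k) (val b L s) = val b L (\<lambda>i. s (i + k))"
    proof (induction k)
      case 0 then show ?case by simp
    next
      case (Suc k)
      have "(\<lambda>i. s (i + k)) \<in> P m" by (rule P_shift[OF sP])
      moreover have "\<forall>i\<ge>L. s (i + k) = 0" using sup by auto
      ultimately show ?case using key[of "\<lambda>i. s (i + k)"] Suc by simp
    qed
  qed
  show ?thesis
  proof
    fix k
    have "(\<lambda>i. s (i + k)) \<in> P m" by (rule P_shift[OF sP])
    moreover have "\<forall>i\<ge>L. s (i + k) = 0" using sup by auto
    ultimately have "\<lfloor>b * val b L (\<lambda>i. s (i + k))\<rfloor> = int (s (0 + k))"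
      using key[of "\<lambda>i. s (i + k)"] by blast
    then have "\<lfloor>b * val b L (\<lambda>i. s (i + k))\<rfloor> = int (s k)" by simp
    then show "beta_digits b (val b L s) k = s k"
      unfolding beta_digits_def it[of k] by simp
  qed
qed

lemma val_range:
  assumes "s \<in> P m" "\<forall>i\<ge>L. s i = 0" shows "val b L s \<in> {0..<1}"
  using val_lt1 val_nonneg b1 assms by auto

lemma map_range: "0 \<le> beta_map b x \<and> beta_map b x < 1"
  unfolding beta_map_def by (simp add: floor_le_iff) linarith

lemma orbit_range: "x \<in> {0..<1} \<Longrightarrow> 0 \<le> (beta_map b ^^ k) x \<and> (beta_map b ^^ k) x < 1"
  by (cases k) (auto simp: map_range)

lemma digits_in_P:
  assumes x: "x \<in> {0..<1}"
  shows "beta_digits b x \<in> P m"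
proof -
  define y where "y k = (beta_map b ^^ k) x" for k
  have yr: "0 \<le> y k \<and> y k < 1" for k using orbit_range[OF x] y_def by simp
  have ys: "y (Suc k) = b * y k - of_int \<lfloor>b * y k\<rfloor>" for k
    unfolding y_def by (simp add: beta_map_def)
  have d: "beta_digits b x k = nat \<lfloor>b * y k\<rfloor>" for k unfolding beta_digits_def y_def by simp
  have dle: "beta_digits b x k \<le> 1" for k
  proof -
    have "b * y k < b * 1" using yr[of k] b1 by (intro mult_strict_left_mono) auto
    then have "b * y k < 2" using b2 by simp
    then have "\<lfloor>b * y k\<rfloor> < 2" by (simp add: floor_less_iff)
    then have "\<lfloor>b * y k\<rfloor> \<le> 1" by simp
    then have "nat \<lfloor>b * y k\<rfloor> \<le> nat 1" by (rule nat_mono)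
    then show ?thesis unfolding d by simp
  qed
  have zero_after: "beta_digits b x (k + j) = 0" if dk: "beta_digits b x k = 1" and j: "1 \<le> j" "j \<le> m" for k j
  proof -
    have "0 \<le> b * y k" using yr[of k] b1 by simp
    then have fl: "\<lfloor>b * y k\<rfloor> = 1" using dk unfolding d by linarith
    have "b * y k < b * 1" using yr[of k] b1 by (intro mult_strict_left_mono) auto
    then have y1: "y (Suc k) < b - 1" using ys[of k] fl by simp
    have y1n: "0 \<le> y (Suc k)" using yr by simp
    have cl: "\<forall>i<m. y (Suc k + i) = b ^ i * y (Suc k) \<and> b * y (Suc k + i) < 1 \<and> 0 \<le> b * y (Suc k + i)"
    proof (intro allI)
      fix i show "i < m \<longrightarrow> y (Suc k + i) = b ^ i * y (Suc k) \<and> b * y (Suc k + i) < 1 \<and> 0 \<le> b * y (Suc k + i)"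
      proof (induction i)
        case 0
        have "b * y (Suc k) < b * (b - 1)" using y1 b1 by simp
        moreover have "m > 0 \<Longrightarrow> b * (b - 1) \<le> b ^ m * (b - 1)" using b1
          by (intro mult_right_mono) (auto intro: order_trans[OF _ power_increasing[of 1 m b]])
        ultimately have "m > 0 \<Longrightarrow> b * y (Suc k) < 1" using eq by linarith
        moreover have "0 \<le> b * y (Suc k)" using y1n b1 by simp
        ultimately show ?case by simp
      next
        case (Suc i)
        show ?case
        proof
          assume im: "Suc i < m"
          then have IH: "y (Suc k + i) = b ^ i * y (Suc k)" "b * y (Suc k + i) < 1" "0 \<le> b * y (Suc k + i)"
            using Suc by auto
          have "\<lfloor>b * y (Suc k + i)\<rfloor> = 0" using IH by (intro floor_unique) auto
          then have yy: "y (Suc k + Suc i) = b ^ Suc i * y (Suc k)"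
            using ys[of "Suc k + i"] IH(1) by simp
          have "b ^ Suc (Suc i) * y (Suc k) < b ^ Suc (Suc i) * (b - 1)"
            using y1 b1 by simp
          also have "\<dots> \<le> b ^ m * (b - 1)"
            using b1 im by (intro mult_right_mono power_increasing) auto
          finally show "y (Suc k + Suc i) = b ^ Suc i * y (Suc k) \<and> b * y (Suc k + Suc i) < 1 \<and> 0 \<le> b * y (Suc k + Suc i)"
            using yy eq y1n b1 by (simp add: mult.assoc)
        qed
      qed
    qed
    have "j - 1 < m" using j by simp
    then have "b * y (Suc k + (j - 1)) < 1" "0 \<le> b * y (Suc k + (j - 1))" using cl by auto
    moreover have "Suc k + (j - 1) = k + j" using j by simp
    ultimately have "\<lfloor>b * y (k + j)\<rfloor> = 0" by (intro floor_unique) auto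
    then show ?thesis unfolding d by simp
  qed
  show ?thesis unfolding P_def
  proof (intro CollectI conjI allI impI)
    fix i show "beta_digits b x i \<le> 1" by (rule dle)
  next
    fix i j :: nat assume "1 \<le> j" "j \<le> m"
    then show "beta_digits b x i = 0 \<or> beta_digits b x (i + j) = 0"
      using dle[of i] zero_after[of i j] by (cases "beta_digits b x i") auto
  qed
qed

lemma S_plus_eq: "S_plus b = P m"
proof
  show "S_plus b \<subseteq> P m" unfolding S_plus_def
    by (intro closure_minimal closed_P) (auto intro: digits_in_P)
next
  show "P m \<subseteq> S_plus b"
  proof
    fix s assume sP: "s \<in> P m"
    define tr where "tr N = (\<lambda>i. if i < N then s i else 0)" for N
    have trP: "tr N \<in> P m" for N using sP unfolding P_def tr_def by auto
    have trs: "\<forall>i\<ge>N. tr N i = 0" for N unfolding tr_def by auto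
    have mem: "tr N \<in> beta_digits b ` {0..<1}" for N
      using digits_val[OF trP trs] val_range[OF trP trs] by (metis image_eqI)
    have lim: "tr \<longlonglongrightarrow> s"
    proof (rule tc)
      fix i show "(\<lambda>n. tr n i) \<longlonglongrightarrow> s i"
        by (rule tendsto_eventually) (auto simp: tr_def eventually_sequentially intro!: exI[of _ "Suc i"])
    qed
    show "s \<in> S_plus b" unfolding S_plus_def closure_sequential using mem lim by blast
  qed
qed

lemma S_minus_eq: "S_minus b = P m"
proof
  show "S_minus b \<subseteq> P m"
  proof
    fix c assume "c \<in> S_minus b"
    then have T: "\<And>n::int. (\<lambda>k::nat. (\<lambda>i::int. if i \<le> 0 then c (nat (- i)) else 0) (n + int k)) \<in> P m"
      unfolding S_minus_def S_bi_def S_plus_eq by blast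
    show "c \<in> P m" unfolding P_def
    proof (intro CollectI conjI allI impI)
      fix i
      show "c i \<le> 1" using T[of "- int i"] unfolding P_def by (auto dest: spec[of _ 0])
    next
      fix i j :: nat assume j: "1 \<le> j" "j \<le> m"
      define t where "t = (\<lambda>k::nat. (\<lambda>i::int. if i \<le> 0 then c (nat (- i)) else 0) (- int (i + j) + int k))"
      have "t \<in> P m" unfolding t_def by (rule T)
      then have "t 0 = 0 \<or> t (0 + j) = 0" using P_D[of t m j 0] j by simp
      moreover have "t 0 = c (i + j)" unfolding t_def by (simp add: nat_int_add add.commute)
      moreover have "t (0 + j) = c i" unfolding t_def by simp
      ultimately show "c i = 0 \<or> c (i + j) = 0" by auto
    qed
  qed
next
  show "P m \<subseteq> S_minus b"
  proof
    fix c assume cP: "c \<in> P m"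
    show "c \<in> S_minus b" unfolding S_minus_def S_bi_def S_plus_eq
    proof (intro CollectI allI)
      fix n :: int
      show "(\<lambda>k::nat. (\<lambda>i::int. if i \<le> 0 then c (nat (- i)) else 0) (n + int k)) \<in> P m"
        unfolding P_def
      proof (intro CollectI conjI allI impI)
        fix i show "(if n + int i \<le> 0 then c (nat (- (n + int i))) else 0) \<le> 1"
          using cP unfolding P_def by auto
      next
        fix i j :: nat assume j: "1 \<le> j" "j \<le> m"
        show "(if n + int i \<le> 0 then c (nat (- (n + int i))) else 0) = 0 \<or>
              (if n + int (i + j) \<le> 0 then c (nat (- (n + int (i + j)))) else 0) = 0"
        proof (cases "n + int (i + j) \<le> 0")
          case False then show ?thesis by simp
        next
          case True
          define p where "p = nat (- (n + int (i + j)))"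
          have q: "nat (- (n + int i)) = p + j" unfolding p_def using True by simp
          have "c p = 0 \<or> c (p + j) = 0" by (rule P_D[OF cP j])
          then show ?thesis using True q p_def by auto
        qed
      qed
    qed
  qed
qed

lemma in_S: "b \<in> S_set"
  unfolding S_set_def using S_plus_eq S_minus_eq b1 by simp

end

lemma exists_small:
  fixes e :: real assumes e: "0 < e" "e < 1"
  shows "\<exists>b\<in>S_set. b \<le> 1 + e"
proof -
  obtain m where m: "1 / e < (1 + e) ^ m" using real_arch_pow[of "1 + e" "1/e"] e by auto
  have f1: "(1 + e) ^ m * ((1 + e) - 1) \<ge> 1" using m e by (simp add: field_simps)
  have "\<exists>x\<ge>1. x \<le> 1 + e \<and> x ^ m * (x - 1) = 1"
    by (rule IVT[of "\<lambda>x. x ^ m * (x - 1)"]) (use f1 e in \<open>auto intro!: continuous_intros\<close>)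
  then obtain x where x: "1 \<le> x" "x \<le> 1 + e" "x ^ m * (x - 1) = 1" by blast
  have "x \<noteq> 1" using x by auto
  then have "bb x m" using x e by unfold_locales auto
  then show ?thesis using bb.in_S x by blast
qed

theorem proposition3p2:
  shows "Inf S_set = 1"
proof (rule cInf_eq_non_empty)
  show "S_set \<noteq> {}" using exists_small[of "1/2"] by auto
next
  fix x assume "x \<in> S_set" then show "1 \<le> x" unfolding S_set_def by auto
next
  fix y assume lb: "\<And>x. x \<in> S_set \<Longrightarrow> y \<le> x"
  show "y \<le> 1"
  proof (rule ccontr)
    assume "\<not> y \<le> 1"
    define e where "e = min ((y - 1) / 2) (1/2)"
    have e3: "e \<le> (y - 1) / 2" unfolding e_def by (rule min.cobounded1)
    have e4: "e \<le> 1 / 2" unfolding e_def by (rule min.cobounded2)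
    have e5: "0 < e" unfolding e_def using \<open>\<not> y \<le> 1\<close> by (simp add: min_def)
    have e1: "0 < e" "e < 1" "e \<le> (y - 1) / 2" using e3 e4 e5 by auto
    then obtain b where bS: "b \<in> S_set" and be: "b \<le> 1 + e"
      using exists_small[of e] by blast
    have "y \<le> b" using lb bS by blast
    then have "y \<le> 1 + (y - 1) / 2" using be e1(3) by linarith
    then have "y \<le> 1" by (simp add: field_simps)
    then show False using \<open>\<not> y \<le> 1\<close> by simp
  qed
qed

end
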